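(* For any nonempty metric spaces $X$ and $Y$, $d_{GH}(X,Y)=d^{ls}_{GH}(X,Y)$.
   Context: For a metric space, $|xy|$ denotes the distance between $x$ and $y$. A set-valued map $f:X\rightrightarrows Y$ assigns to each $x\in X$ a nonempty subset $f(x)\subseteq Y$; it is identified with its graph $\bigcup_{x\in X}\{x\}\times f(x)\subseteq X\times Y$. A correspondence between $X$ and $Y$ is a subset $R\subseteq X\times Y$ whose projections to $X$ and to $Y$ are both surjective; it is regarded as the set-valued map $x\mapsto R(x)=\{y:(x,y)\in R\}$, and $R^{-1}=\{(y,x):(x,y)\in R\}$ is a correspondence between $Y$ and $X$. $\mathcal R(X,Y)$ is the set of all correspondences. The distortion of a nonempty relation $\sigma\subseteq X\times Y$ is $\operatorname{dis}\sigma=\sup\{||xx'|-|yy'||:(x,y),(x',y')\in\sigma\}\in[0,\infty]$. The Gromov–Hausdorff distance is $d_{GH}(X,Y)=\frac12\inf\{\operatorname{dis}R:R\in\mathcal R(X,Y)\}$ (this agrees with the usual definition via isometric embeddings). A set-valued map $f:X\rightrightarrows Y$ of topological spaces is lower semicontinuous if for every $x\in X$ and every open $U\subseteq Y$ with $f(x)\cap U\neq\emptyset$ there is a neighborhood $V$ of $x$ with $f(x')\cap U\ne\emptyset$ for all $x'\in V$. $\mathcal R_{ls}(X,Y)$ is the set of $R\in\mathcal R(X,Y)$ such that both $R:X\rightrightarrows Y$ and $R^{-1}:Y\rightrightarrows X$ are lower semicontinuous, and $d^{ls}_{GH}(X,Y)=\frac12\inf\{\operatorname{dis}R:R\in\mathcal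 R_{ls}(X,Y)\}$. *)

theory Defs
  imports "HOL-Analysis.Analysis"
begin

definition correspondence :: "'a set \<Rightarrow> 'b set \<Rightarrow> ('a \<times> 'b) set \<Rightarrow> bool" where
  "correspondence X Y R \<longleftrightarrow> R \<subseteq> X \<times> Y \<and> fst ` R = X \<and> snd ` R = Y"

definition distortion :: "('a \<Rightarrow> 'a \<Rightarrow> real) \<Rightarrow> ('b \<Rightarrow> 'b \<Rightarrow> real) \<Rightarrow> ('a \<times> 'b) set \<Rightarrow> ereal" where
  "distortion dX dY \<sigma> =
     (SUP p \<in> \<sigma> \<times> \<sigma>. ereal \<bar>dX (fst (fst p)) (fst (snd p)) - dY (snd (fst p)) (snd (snd p))\<bar>)"

definition lsc_setvalued :: "'a topology \<Rightarrow> 'b topology \<Rightarrow> ('a \<times> 'b) set \<Rightarrow> bool" where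
  "lsc_setvalued T S R \<longleftrightarrow>
     (\<forall>x \<in> topspace T. \<forall>U. openin S U \<and> R `` {x} \<inter> U \<noteq> {} \<longrightarrow>
        (\<exists>V. openin T V \<and> x \<in> V \<and> (\<forall>x' \<in> V. R `` {x'} \<inter> U \<noteq> {})))"

definition GH_dist :: "'a set \<Rightarrow> ('a \<Rightarrow> 'a \<Rightarrow> real) \<Rightarrow> 'b set \<Rightarrow> ('b \<Rightarrow> 'b \<Rightarrow> real) \<Rightarrow> ereal" where
  "GH_dist X dX Y dY = ereal (1/2) * (INF R \<in> {R. correspondence X Y R}. distortion dX dY R)"

definition GH_dist_ls :: "'a set \<Rightarrow> ('a \<Rightarrow> 'a \<Rightarrow> real) \<Rightarrow> 'b set \<Rightarrow> ('b \<Rightarrow> 'b \<Rightarrow> real) \<Rightarrow> ereal" where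
  "GH_dist_ls X dX Y dY = ereal (1/2) *
     (INF R \<in> {R. correspondence X Y R
                  \<and> lsc_setvalued (Metric_space.mtopology X dX) (Metric_space.mtopology Y dY) R
                  \<and> lsc_setvalued (Metric_space.mtopology Y dY) (Metric_space.mtopology X dX) (converse R)}.
        distortion dX dY R)"

end

theory Submission
  imports Defs
begin

definition thick :: "'a set \<Rightarrow> ('a \<Rightarrow> 'a \<Rightarrow> real) \<Rightarrow> 'b set \<Rightarrow> ('b \<Rightarrow> 'b \<Rightarrow> real) \<Rightarrow> ('a \<times> 'b) set \<Rightarrow> real \<Rightarrow> ('a \<times> 'b) set" where
  "thick X dX Y dY R e = {(x,y). x \<in> X \<and> y \<in> Y \<and> (\<exists>(a,b)\<in>R. dX x a < e \<and> dY y b < e)}"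

lemma thick_conv: "converse (thick X dX Y dY R e) = thick Y dY X dX (converse R) e"
  unfolding thick_def by auto

lemma thick_lsc:
  assumes MX: "Metric_space X dX" and RX: "R \<subseteq> X \<times> Y"
  shows "lsc_setvalued (Metric_space.mtopology X dX) T (thick X dX Y dY R e)"
  unfolding lsc_setvalued_def
proof (intro ballI allI impI)
  fix x U assume x: "x \<in> topspace (Metric_space.mtopology X dX)"
    and U: "openin T U \<and> thick X dX Y dY R e `` {x} \<inter> U \<noteq> {}"
  then obtain y where y: "y \<in> U" "(x,y) \<in> thick X dX Y dY R e" by auto
  then obtain a b where ab: "(a,b) \<in> R" "dX x a < e" "dY y b < e" "x \<in> X" "y \<in> Y"
    unfolding thick_def by auto
  have aX: "a \<in> X" using ab RX by auto
  show "\<exists>V. openin (Metric_space.mtopology X dX) V \<and> x \<in> V \<and>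
          (\<forall>x'\<in>V. thick X dX Y dY R e `` {x'} \<inter> U \<noteq> {})"
  proof (intro exI conjI ballI)
    show "openin (Metric_space.mtopology X dX) (Metric_space.mball X dX x (e - dX x a))"
      using Metric_space.openin_mball[OF MX] by blast
    show "x \<in> Metric_space.mball X dX x (e - dX x a)"
      using Metric_space.centre_in_mball_iff[OF MX] ab by auto
    fix x' assume x': "x' \<in> Metric_space.mball X dX x (e - dX x a)"
    hence x'X: "x' \<in> X" and d: "dX x x' < e - dX x a"
      using Metric_space.in_mball[OF MX] by auto
    have "dX x' a \<le> dX x x' + dX x a"
      using Metric_space.triangle''[OF MX x'X ab(4) aX] .
    hence "dX x' a < e" using d by linarith
    hence "(x', y) \<in> thick X dX Y dY R e" unfolding thick_def using x'X ab by auto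
    thus "thick X dX Y dY R e `` {x'} \<inter> U \<noteq> {}" using y by auto
  qed
qed

lemma thick_corr:
  assumes MX: "Metric_space X dX" and MY: "Metric_space Y dY"
    and C: "correspondence X Y R" and e: "e > 0"
  shows "correspondence X Y (thick X dX Y dY R e)"
proof -
  have sub: "R \<subseteq> thick X dX Y dY R e"
  proof
    fix p assume p: "p \<in> R"
    obtain a b where pab: "p = (a,b)" by force
    have "a \<in> X" "b \<in> Y" using C p pab unfolding correspondence_def by auto
    moreover have "dX a a = 0" "dY b b = 0"
      using Metric_space.mdist_zero[OF MX] Metric_space.mdist_zero[OF MY] \<open>a \<in> X\<close> \<open>b \<in> Y\<close> by auto
    ultimately show "p \<in> thick X dX Y dY R e" unfolding thick_def using p pab e by (auto intro!: bexI[of _ "(a,b)"])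
  qed
  have "thick X dX Y dY R e \<subseteq> X \<times> Y" unfolding thick_def by auto
  thus ?thesis using sub C unfolding correspondence_def by (auto; force)
qed

lemma thick_dis:
  assumes MX: "Metric_space X dX" and MY: "Metric_space Y dY"
    and RX: "R \<subseteq> X \<times> Y"
  shows "distortion dX dY (thick X dX Y dY R e) \<le> distortion dX dY R + ereal (4*e)"
  unfolding distortion_def
proof (rule SUP_least)
  fix p assume p: "p \<in> thick X dX Y dY R e \<times> thick X dX Y dY R e"
  obtain x y x' y' where pe: "p = ((x,y),(x',y'))" by (metis prod.collapse)
  from p pe obtain a b a' b' where
    h: "(a,b) \<in> R" "dX x a < e" "dY y b < e" "x \<in> X" "y \<in> Y"
       "(a',b') \<in> R" "dX x' a' < e" "dY y' b' < e" "x' \<in> X" "y' \<in> Y"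
    unfolding thick_def by auto
  have m: "a \<in> X" "b \<in> Y" "a' \<in> X" "b' \<in> Y" using h RX by auto
  have t1: "dX x x' \<le> dX x a + dX a a' + dX a' x'"
    using Metric_space.triangle[OF MX h(4) m(1) h(9)] Metric_space.triangle[OF MX m(1) m(3) h(9)] by linarith
  have t2: "dX a a' \<le> dX a x + dX x x' + dX x' a'"
    using Metric_space.triangle[OF MX m(1) h(4) m(3)] Metric_space.triangle[OF MX h(4) h(9) m(3)] by linarith
  have t3: "dY y y' \<le> dY y b + dY b b' + dY b' y'"
    using Metric_space.triangle[OF MY h(5) m(2) h(10)] Metric_space.triangle[OF MY m(2) m(4) h(10)] by linarith
  have t4: "dY b b' \<le> dY b y + dY y y' + dY y' b'"
    using Metric_space.triangle[OF MY m(2) h(5) m(4)] Metric_space.triangle[OF MY h(5) h(10) m(4)] by linarith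
  have c: "dX a' x' = dX x' a'" "dX a x = dX x a" "dY b' y' = dY y' b'" "dY b y = dY y b"
    using Metric_space.commute[OF MX] Metric_space.commute[OF MY] by auto
  have key: "\<bar>dX x x' - dY y y'\<bar> \<le> \<bar>dX a a' - dY b b'\<bar> + 4*e"
    using t1 t2 t3 t4 c h by linarith
  have "ereal \<bar>dX a a' - dY b b'\<bar> \<le> (SUP p \<in> R \<times> R. ereal \<bar>dX (fst (fst p)) (fst (snd p)) - dY (snd (fst p)) (snd (snd p))\<bar>)"
    by (rule SUP_upper2[of "((a,b),(a',b'))"]) (use h in auto)
  hence "ereal \<bar>dX a a' - dY b b'\<bar> + ereal (4*e) \<le> (SUP p \<in> R \<times> R. ereal \<bar>dX (fst (fst p)) (fst (snd p)) - dY (snd (fst p)) (snd (snd p))\<bar>) + ereal (4*e)"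
    by (rule add_right_mono)
  moreover have "ereal \<bar>dX x x' - dY y y'\<bar> \<le> ereal \<bar>dX a a' - dY b b'\<bar> + ereal (4*e)"
    using key by simp
  ultimately show "ereal \<bar>dX (fst (fst p)) (fst (snd p)) - dY (snd (fst p)) (snd (snd p))\<bar>
     \<le> (SUP p \<in> R \<times> R. ereal \<bar>dX (fst (fst p)) (fst (snd p)) - dY (snd (fst p)) (snd (snd p))\<bar>) + ereal (4*e)"
    using pe by (metis (no_types, lifting) fst_conv snd_conv order_trans)
qed

theorem mainTheorem1:
  fixes X :: "'a set" and dX :: "'a \<Rightarrow> 'a \<Rightarrow> real"
    and Y :: "'b set" and dY :: "'b \<Rightarrow> 'b \<Rightarrow> real"
  assumes "Metric_space X dX" and "Metric_space Y dY"
    and "X \<noteq> {}" and "Y \<noteq> {}"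
  shows "GH_dist X dX Y dY = GH_dist_ls X dX Y dY"
proof -
  let ?LS = "{R. correspondence X Y R
                  \<and> lsc_setvalued (Metric_space.mtopology X dX) (Metric_space.mtopology Y dY) R
                  \<and> lsc_setvalued (Metric_space.mtopology Y dY) (Metric_space.mtopology X dX) (converse R)}"
  let ?A = "INF R \<in> {R. correspondence X Y R}. distortion dX dY R"
  let ?B = "INF R \<in> ?LS. distortion dX dY R"
  have "?A \<le> ?B" by (rule INF_superset_mono) auto
  moreover have "?B \<le> ?A"
  proof (rule INF_greatest)
    fix R assume "R \<in> {R. correspondence X Y R}"
    hence C: "correspondence X Y R" by simp
    hence RX: "R \<subseteq> X \<times> Y" unfolding correspondence_def by simp
    show "?B \<le> distortion dX dY R"
    proof (rule ereal_le_epsilon2)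
      fix e :: real assume e: "0 < e"
      define T where "T = thick X dX Y dY R (e/4)"
      have "T \<in> ?LS"
      proof (simp, intro conjI)
        show "correspondence X Y T" unfolding T_def using thick_corr[OF assms(1,2) C] e by simp
        show "lsc_setvalued (Metric_space.mtopology X dX) (Metric_space.mtopology Y dY) T"
          unfolding T_def using thick_lsc[OF assms(1) RX] by blast
        have "converse R \<subseteq> Y \<times> X" using RX by auto
        then show "lsc_setvalued (Metric_space.mtopology Y dY) (Metric_space.mtopology X dX) (converse T)"
          unfolding T_def thick_conv using thick_lsc[OF assms(2)] by blast
      qed
      hence "?B \<le> distortion dX dY T" by (rule INF_lower)
      also have "\<dots> \<le> distortion dX dY R + ereal (4*(e/4))"
        unfolding T_def by (rule thick_dis[OF assms(1,2) RX])
      finally show "?B \<le> distortion dX dY R + ereal e" by simp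
    qed
  qed
  ultimately have "?A = ?B" by (rule antisym)
  thus ?thesis unfolding GH_dist_def GH_dist_ls_def by simp
qed

end
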